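(* Let $U$ and $\widetilde{U}$ be as defined in the context, let $a\in\mathbb{N}_1$ and $l\in\mathbb{N}_1$ with $U^l(a)=a$. Then for every $x\in\mathbb{R}_0$ the following are equivalent: (i) the parity sequence $\mathcal{P}_{\widetilde U}(x)=(\lfloor \widetilde U^i(x)\rfloor \bmod 2)_{i\ge 0}$ is eventually periodic with period $\tilde s=(1-(a\bmod 2),\,1-(U(a)\bmod 2),\dots,1-(U^{l-1}(a)\bmod 2))$, i.e. there is $j\in\mathbb{N}_0$ such that $(\lfloor \widetilde U^{i}(x)\rfloor\bmod 2,\dots,\lfloor \widetilde U^{i+l-1}(x)\rfloor\bmod 2)=\tilde s$ for all $i=j+ml$, $m\in\mathbb{N}_0$; (ii) $\mathcal{T}_{\widetilde U}(x)$ tends to $\{U^t(a)\}$ from below, i.e. there is $j_0\in\mathbb{N}_0$ such that for every $j\in\{0,1,\dots,l-1\}$ the sequence $\big(\widetilde U^{kl}(\widetilde U^{j+j_0}(x))\big)_{k\ge 0}$ converges to $U^j(a)$ as $k\to\infty$ and all of its terms are strictly less than $U^j(a)$.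
   Context: $\mathbb{R}_0=\{x\ge0\}$, $\mathbb{R}_1=\{x\ge1\}$, $\mathbb{N}_0=\{0,1,2,\dots\}$, $\mathbb{N}_1=\{1,2,\dots\}$, $\lfloor x\rfloor$ is the floor. $U:\mathbb{R}_1\to\mathbb{R}_1$: $U(x)=x/2$ if $\lfloor x\rfloor$ even, $U(x)=(3x+1)/2$ if $\lfloor x\rfloor$ odd. $\widetilde U:\mathbb{R}_0\to\mathbb{R}_0$: $\widetilde U(x)=(3x+1)/2$ if $\lfloor x\rfloor$ even, $\widetilde U(x)=x/2$ if $\lfloor x\rfloor$ odd. Iterates: $f^0=\mathrm{id}$, $f^i=f\circ f^{i-1}$; $\mathcal{T}_f(x)=(f^i(x))_{i\ge0}$. *)

theory Defs
  imports Complex_Main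
begin

text \<open>U on R_1 (defined totally on real; only used on points >= 1).\<close>
definition U :: "real \<Rightarrow> real" where
  "U x = (if even \<lfloor>x\<rfloor> then x / 2 else (3 * x + 1) / 2)"

text \<open>U tilde on R_0 (defined totally on real; only used on points >= 0).\<close>
definition Ut :: "real \<Rightarrow> real" where
  "Ut x = (if even \<lfloor>x\<rfloor> then (3 * x + 1) / 2 else x / 2)"

end

theory Submission
  imports Defs
begin

definition cf :: "real \<Rightarrow> nat \<Rightarrow> real" where
  "cf b i = (if even \<lfloor>(U ^^ i) b\<rfloor> then 1/2 else 3/2)"

definition P :: "real \<Rightarrow> nat \<Rightarrow> real" where
  "P b k = (\<Prod>i<k. cf b i)"

lemma cf_pos: "cf b i > 0" by (simp add: cf_def)

lemma P_pos: "P b k > 0" unfolding P_def by (rule prod_pos) (simp add: cf_pos)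

lemma P_Suc: "P b (Suc k) = P b k * cf b k" by (simp add: P_def)

lemma U_int: "y \<in> \<int> \<Longrightarrow> U y \<in> \<int>"
proof -
  assume "y \<in> \<int>"
  then obtain m where m: "y = of_int m" by (auto elim: Ints_cases)
  have fl: "\<lfloor>y\<rfloor> = m" using m by simp
  show ?thesis
  proof (cases "even m")
    case True
    then obtain q where "m = 2*q" by blast
    then have "U y = of_int q" using m fl True by (simp add: U_def)
    then show ?thesis by simp
  next
    case False
    then obtain q where "m = 2*q+1" using oddE by blast
    then have "U y = of_int (3*q+2)" using m fl False by (simp add: U_def field_simps)
    then show ?thesis by simp
  qed
qed

lemma N_int: "b \<in> \<int> \<Longrightarrow> (U ^^ i) b \<in> \<int>"
  by (induction i) (auto intro: U_int)

lemma U_pos: "y > 0 \<Longrightarrow> U y > 0" by (simp add: U_def)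

lemma N_pos: "b > 0 \<Longrightarrow> (U ^^ i) b > 0"
  by (induction i) (auto intro: U_pos)

lemma Ut_step:
  assumes "y \<in> \<int>" "\<lfloor>z\<rfloor> mod 2 = 1 - \<lfloor>y\<rfloor> mod 2"
  shows "Ut z = U y - (if even \<lfloor>y\<rfloor> then 1/2 else 3/2) * (y - z)"
proof (cases "even \<lfloor>y\<rfloor>")
  case True
  then have "\<lfloor>y\<rfloor> mod 2 = 0" by presburger
  then have "odd \<lfloor>z\<rfloor>" using assms(2) by presburger
  then show ?thesis using True by (simp add: U_def Ut_def field_simps)
next
  case False
  then have "\<lfloor>y\<rfloor> mod 2 = 1" by presburger
  then have "even \<lfloor>z\<rfloor>" using assms(2) by presburger
  then show ?thesis using False by (simp add: U_def Ut_def field_simps)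
qed

lemma traj:
  assumes "b \<in> \<int>" "\<forall>i. \<lfloor>(Ut ^^ i) z\<rfloor> mod 2 = 1 - \<lfloor>(U ^^ i) b\<rfloor> mod 2"
  shows "(Ut ^^ k) z = (U ^^ k) b - P b k * (b - z)"
proof (induction k)
  case 0
  then show ?case by (simp add: P_def)
next
  case (Suc k)
  have i: "(U ^^ k) b \<in> \<int>" using assms(1) by (rule N_int)
  have "(Ut ^^ Suc k) z = Ut ((Ut ^^ k) z)" by simp
  also have "\<dots> = U ((U ^^ k) b) - cf b k * ((U ^^ k) b - (Ut ^^ k) z)"
    using Ut_step[OF i assms(2)[rule_format, of k]] by (simp add: cf_def)
  also have "\<dots> = (U ^^ Suc k) b - P b (Suc k) * (b - z)"
    by (subst Suc.IH) (simp add: P_Suc algebra_simps)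
  finally show ?case .
qed

lemma P_lt1:
  assumes "b \<in> \<int>" "b > 0" "l \<ge> 1" "(U ^^ l) b = b"
  shows "P b l < 1"
proof -
  have key: "(U ^^ k) b - P b k * b \<ge> 0 \<and> ((\<exists>i<k. odd \<lfloor>(U ^^ i) b\<rfloor>) \<longrightarrow> (U ^^ k) b - P b k * b > 0)
     \<and> ((\<forall>i<k. even \<lfloor>(U ^^ i) b\<rfloor>) \<longrightarrow> (U ^^ k) b = b / 2 ^ k)" for k
  proof (induction k)
    case 0
    then show ?case by (simp add: P_def)
  next
    case (Suc k)
    show ?case
    proof (cases "even \<lfloor>(U ^^ k) b\<rfloor>")
      case True
      then have e: "(U ^^ Suc k) b = (U ^^ k) b / 2" "P b (Suc k) = P b k / 2"
        by (simp_all add: U_def P_Suc cf_def)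
      have "(\<exists>i<Suc k. odd \<lfloor>(U ^^ i) b\<rfloor>) = (\<exists>i<k. odd \<lfloor>(U ^^ i) b\<rfloor>)"
        using True less_Suc_eq by auto
      moreover have "(\<forall>i<Suc k. even \<lfloor>(U ^^ i) b\<rfloor>) = (\<forall>i<k. even \<lfloor>(U ^^ i) b\<rfloor>)"
        using True less_Suc_eq by auto
      have dd: "(U ^^ Suc k) b - P b (Suc k) * b = ((U ^^ k) b - P b k * b)/2"
        unfolding e by (simp add: field_simps)
      ultimately show ?thesis
      proof (intro conjI impI)
        have "(U ^^ k) b - P b k * b \<ge> 0" using Suc.IH by blast
        then show "0 \<le> (U ^^ Suc k) b - P b (Suc k) * b" unfolding dd by simp
      next
        assume a: "\<exists>i<Suc k. odd \<lfloor>(U ^^ i) b\<rfloor>"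
        then have "\<exists>i<k. odd \<lfloor>(U ^^ i) b\<rfloor>" using True less_Suc_eq by auto
        then have "(U ^^ k) b - P b k * b > 0" using Suc.IH by blast
        then show "0 < (U ^^ Suc k) b - P b (Suc k) * b" unfolding dd by simp
      next
        assume a: "\<forall>i<Suc k. even \<lfloor>(U ^^ i) b\<rfloor>"
        then have "(U ^^ k) b = b / 2 ^ k" using Suc.IH by auto
        then show "(U ^^ Suc k) b = b / 2 ^ Suc k" using e by simp
      qed
    next
      case False
      then have e: "(U ^^ Suc k) b = (3 * (U ^^ k) b + 1) / 2" "P b (Suc k) = P b k * (3/2)"
        by (simp_all add: U_def P_Suc cf_def)
      have dd: "(U ^^ Suc k) b - P b (Suc k) * b = 3/2 * ((U ^^ k) b - P b k * b) + 1/2"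
        unfolding e by (simp add: field_simps)
      have "(U ^^ k) b - P b k * b \<ge> 0" using Suc.IH by blast
      moreover have "\<And>t::real. t \<ge> 0 \<Longrightarrow> 3/2*t + 1/2 > 0" by simp
      ultimately have "(U ^^ Suc k) b - P b (Suc k) * b > 0" unfolding dd by blast
      moreover have "\<not>(\<forall>i<Suc k. even \<lfloor>(U ^^ i) b\<rfloor>)" using False by auto
      ultimately show ?thesis by auto
    qed
  qed
  show ?thesis
  proof (cases "\<exists>i<l. odd \<lfloor>(U ^^ i) b\<rfloor>")
    case True
    then have "b - P b l * b > 0" using key[of l] assms(4) by auto
    then have "(1 - P b l) * b > 0" by (simp add: algebra_simps)
    then show ?thesis using assms(2) by (simp add: zero_less_mult_iff)
  next
    case False
    then have "b = b / 2 ^ l" using key[of l] assms(4) by auto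
    moreover have "(2::real) ^ l > 1" using assms(3) by (simp add: one_less_power)
    then have "b * 1 < b * 2 ^ l" using assms(2) by (rule mult_strict_left_mono)
    then have "b / 2 ^ l < b" by (simp add: divide_less_eq)
    with \<open>b = b / 2 ^ l\<close> show ?thesis by simp
  qed
qed

lemma funpow_period: "(f ^^ l) b = b \<Longrightarrow> (f ^^ (m * l + i)) b = (f ^^ i) b"
proof (induction m)
  case 0 then show ?case by simp
next
  case (Suc m)
  have e: "Suc m * l + i = (m*l+i) + l" by simp
  have "(f ^^ (Suc m * l + i)) b = (f ^^ (m * l + i)) ((f ^^ l) b)"
    by (simp only: e funpow_add o_apply)
  then show ?case using Suc by simp
qed

lemma prod_split: "(\<Prod>i<(k::nat) + l. f i) = (\<Prod>i<k. f i) * (\<Prod>i<l. f (k + i))"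
  by (induction l) (auto simp: algebra_simps)

lemma P_mult:
  assumes "(U ^^ l) b = b"
  shows "P b (m * l) = (P b l) ^ m"
proof (induction m)
  case 0 then show ?case by (simp add: P_def)
next
  case (Suc m)
  have "P b (Suc m * l) = P b (m * l) * (\<Prod>i<l. cf b (m * l + i))"
  proof -
    have e: "Suc m * l = m*l + l" by simp
    show ?thesis unfolding P_def by (simp only: e prod_split)
  qed
  also have "(\<Prod>i<l. cf b (m * l + i)) = P b l"
    unfolding P_def cf_def using funpow_period[OF assms] by simp
  finally show ?case using Suc by simp
qed

lemma cycle_shift:
  assumes "(U ^^ l) A = A"
  shows "(U ^^ l) ((U ^^ j) A) = (U ^^ j) A"
proof -
  have "(U ^^ l) ((U ^^ j) A) = (U ^^ (l + j)) A" by (simp add: funpow_add)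
  also have "\<dots> = (U ^^ (j + l)) A" by (simp add: add.commute)
  also have "\<dots> = (U ^^ j) A" using assms by (simp add: funpow_add)
  finally show ?thesis .
qed

lemma forward_one:
  assumes bint: "b \<in> \<int>" and bpos: "b > 0" and l1: "l \<ge> 1" and cyc: "(U ^^ l) b = b"
    and par: "\<forall>i. \<lfloor>(Ut ^^ i) z\<rfloor> mod 2 = 1 - \<lfloor>(U ^^ i) b\<rfloor> mod 2"
  shows "((\<lambda>k. (Ut ^^ (k * l)) z) \<longlonglongrightarrow> b) \<and> (\<forall>k. (Ut ^^ (k * l)) z < b)"
proof -
  define lam where "lam = P b l"
  define e where "e = b - z"
  have lam0: "lam > 0" unfolding lam_def by (rule P_pos)
  have lam1: "lam < 1" unfolding lam_def using P_lt1[OF bint bpos l1 cyc] .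
  have Ub: "(U ^^ (k * l)) b = b" for k using funpow_period[OF cyc, of k 0] by simp
  have tk: "(Ut ^^ (k * l)) z = b - lam ^ k * e" for k
    using traj[OF bint par, of "k * l"] Ub[of k] P_mult[OF cyc, of k]
    by (simp add: lam_def e_def)
  have lim0: "(\<lambda>k. lam ^ k * e) \<longlonglongrightarrow> 0"
    using LIMSEQ_power_zero[of lam] lam0 lam1 by (auto intro: tendsto_mult_left_zero)
  have epos: "e > 0"
  proof (rule ccontr)
    assume "\<not> e > 0"
    then have ele: "e \<le> 0" by simp
    have "eventually (\<lambda>k. lam ^ k * e > -1) sequentially"
      using lim0 by (rule order_tendstoD) simp
    then obtain k where k: "lam ^ k * e > -1" by (auto simp: eventually_sequentially)
    have "lam ^ k * e \<le> 0" using ele lam0 by (simp add: mult_nonneg_nonpos)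
    from bint obtain n where n: "b = of_int n" by (auto elim: Ints_cases)
    have fl: "\<lfloor>(Ut ^^ (k * l)) z\<rfloor> = n"
      unfolding tk n using k \<open>lam ^ k * e \<le> 0\<close> by (simp add: floor_eq_iff)
    have "\<lfloor>(Ut ^^ (k * l)) z\<rfloor> mod 2 = 1 - \<lfloor>(U ^^ (k * l)) b\<rfloor> mod 2"
      using par by blast
    then have "n mod 2 = 1 - n mod 2" using fl Ub[of k] n by simp
    then show False by presburger
  qed
  have "(\<lambda>k. b - lam ^ k * e) \<longlonglongrightarrow> b - 0"
    by (intro tendsto_diff tendsto_const lim0)
  then have "(\<lambda>k. (Ut ^^ (k * l)) z) \<longlonglongrightarrow> b" using tk by simp
  moreover have "(Ut ^^ (k * l)) z < b" for k
    using tk[of k] epos lam0 by simp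
  ultimately show ?thesis by blast
qed

theorem proposition2:
  fixes a l :: nat and x :: real
  assumes "a \<ge> 1" and "l \<ge> 1" and "(U ^^ l) (real a) = real a" and "x \<ge> 0"
  shows "(\<exists>j::nat. \<forall>m::nat. \<forall>r<l.
            \<lfloor>(Ut ^^ (j + m * l + r)) x\<rfloor> mod 2 = 1 - (\<lfloor>(U ^^ r) (real a)\<rfloor> mod 2))
     \<longleftrightarrow>
         (\<exists>j0::nat. \<forall>j<l.
            ((\<lambda>k. (Ut ^^ (k * l)) ((Ut ^^ (j + j0)) x)) \<longlonglongrightarrow> (U ^^ j) (real a)) \<and>
            (\<forall>k. (Ut ^^ (k * l)) ((Ut ^^ (j + j0)) x) < (U ^^ j) (real a)))"
proof
  have Aint: "(U ^^ r) (real a) \<in> \<int>" for r by (rule N_int) simp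
  have Apos: "(U ^^ r) (real a) > 0" for r using assms(1) by (intro N_pos) simp
  {
    assume "\<exists>j::nat. \<forall>m::nat. \<forall>r<l.
            \<lfloor>(Ut ^^ (j + m * l + r)) x\<rfloor> mod 2 = 1 - (\<lfloor>(U ^^ r) (real a)\<rfloor> mod 2)"
    then obtain j where hj: "\<forall>m::nat. \<forall>r<l.
            \<lfloor>(Ut ^^ (j + m * l + r)) x\<rfloor> mod 2 = 1 - (\<lfloor>(U ^^ r) (real a)\<rfloor> mod 2)"
      by blast
    have "\<forall>j'<l.
            ((\<lambda>k. (Ut ^^ (k * l)) ((Ut ^^ (j' + j)) x)) \<longlonglongrightarrow> (U ^^ j') (real a)) \<and>
            (\<forall>k. (Ut ^^ (k * l)) ((Ut ^^ (j' + j)) x) < (U ^^ j') (real a))"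
    proof (intro allI impI)
      fix j' assume j': "j' < l"
      have par: "\<forall>i. \<lfloor>(Ut ^^ i) ((Ut ^^ (j' + j)) x)\<rfloor> mod 2
                   = 1 - \<lfloor>(U ^^ i) ((U ^^ j') (real a))\<rfloor> mod 2"
      proof
        fix i
        define m where "m = (j' + i) div l"
        define r where "r = (j' + i) mod l"
        have r: "r < l" unfolding r_def using assms(2) by simp
        have dec: "j' + i = m * l + r" unfolding m_def r_def by simp
        have "(Ut ^^ i) ((Ut ^^ (j' + j)) x) = (Ut ^^ (j + m * l + r)) x"
        proof -
          have "(Ut ^^ i) ((Ut ^^ (j' + j)) x) = (Ut ^^ (i + (j' + j))) x" by (simp add: funpow_add)
          moreover have "i + (j' + j) = j + m * l + r" using dec by simp
          ultimately show ?thesis by simp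
        qed
        moreover have "(U ^^ i) ((U ^^ j') (real a)) = (U ^^ r) (real a)"
        proof -
          have "(U ^^ i) ((U ^^ j') (real a)) = (U ^^ (j' + i)) (real a)"
            by (simp add: funpow_add add.commute)
          also have "\<dots> = (U ^^ r) (real a)" unfolding dec using funpow_period[OF assms(3)] .
          finally show ?thesis .
        qed
        ultimately show "\<lfloor>(Ut ^^ i) ((Ut ^^ (j' + j)) x)\<rfloor> mod 2
                   = 1 - \<lfloor>(U ^^ i) ((U ^^ j') (real a))\<rfloor> mod 2"
          using hj r by simp
      qed
      show "((\<lambda>k. (Ut ^^ (k * l)) ((Ut ^^ (j' + j)) x)) \<longlonglongrightarrow> (U ^^ j') (real a)) \<and>
            (\<forall>k. (Ut ^^ (k * l)) ((Ut ^^ (j' + j)) x) < (U ^^ j') (real a))"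
        by (rule forward_one[OF Aint Apos assms(2) cycle_shift[OF assms(3)] par])
    qed
    then show "\<exists>j0::nat. \<forall>j<l.
            ((\<lambda>k. (Ut ^^ (k * l)) ((Ut ^^ (j + j0)) x)) \<longlonglongrightarrow> (U ^^ j) (real a)) \<and>
            (\<forall>k. (Ut ^^ (k * l)) ((Ut ^^ (j + j0)) x) < (U ^^ j) (real a))" by blast
  }
  {
    assume "\<exists>j0::nat. \<forall>j<l.
            ((\<lambda>k. (Ut ^^ (k * l)) ((Ut ^^ (j + j0)) x)) \<longlonglongrightarrow> (U ^^ j) (real a)) \<and>
            (\<forall>k. (Ut ^^ (k * l)) ((Ut ^^ (j + j0)) x) < (U ^^ j) (real a))"
    then obtain j0 where H: "\<forall>j<l.
            ((\<lambda>k. (Ut ^^ (k * l)) ((Ut ^^ (j + j0)) x)) \<longlonglongrightarrow> (U ^^ j) (real a)) \<and>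
            (\<forall>k. (Ut ^^ (k * l)) ((Ut ^^ (j + j0)) x) < (U ^^ j) (real a))" by blast
    have "\<forall>j\<in>{..<l}. eventually (\<lambda>k. (Ut ^^ (k * l)) ((Ut ^^ (j + j0)) x) > (U ^^ j) (real a) - 1) sequentially"
    proof
      fix j assume "j \<in> {..<l}"
      then have "(\<lambda>k. (Ut ^^ (k * l)) ((Ut ^^ (j + j0)) x)) \<longlonglongrightarrow> (U ^^ j) (real a)" using H by simp
      then show "eventually (\<lambda>k. (Ut ^^ (k * l)) ((Ut ^^ (j + j0)) x) > (U ^^ j) (real a) - 1) sequentially"
        by (rule order_tendstoD) simp
    qed
    then have "eventually (\<lambda>k. \<forall>j\<in>{..<l}. (Ut ^^ (k * l)) ((Ut ^^ (j + j0)) x) > (U ^^ j) (real a) - 1) sequentially"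
      by (intro eventually_ball_finite) simp_all
    then obtain K where K: "\<And>k. k \<ge> K \<Longrightarrow> \<forall>j\<in>{..<l}. (Ut ^^ (k * l)) ((Ut ^^ (j + j0)) x) > (U ^^ j) (real a) - 1"
      by (auto simp: eventually_sequentially)
    have "\<forall>m::nat. \<forall>r<l.
            \<lfloor>(Ut ^^ (j0 + K * l + m * l + r)) x\<rfloor> mod 2 = 1 - (\<lfloor>(U ^^ r) (real a)\<rfloor> mod 2)"
    proof (intro allI impI)
      fix m r assume r: "r < l"
      have eq: "(Ut ^^ (j0 + K * l + m * l + r)) x = (Ut ^^ ((K + m) * l)) ((Ut ^^ (r + j0)) x)"
      proof -
        have "(Ut ^^ ((K + m) * l)) ((Ut ^^ (r + j0)) x) = (Ut ^^ ((K + m) * l + (r + j0))) x"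
          by (simp add: funpow_add)
        moreover have "(K + m) * l + (r + j0) = j0 + K * l + m * l + r" by (simp add: algebra_simps)
        ultimately show ?thesis by simp
      qed
      from Aint[of r] obtain n where n: "(U ^^ r) (real a) = of_int n" by (auto elim: Ints_cases)
      have lo: "(Ut ^^ ((K + m) * l)) ((Ut ^^ (r + j0)) x) > (U ^^ r) (real a) - 1"
        using K[of "K + m"] r by simp
      have hi: "(Ut ^^ ((K + m) * l)) ((Ut ^^ (r + j0)) x) < (U ^^ r) (real a)"
        using H r by blast
      have "\<lfloor>(Ut ^^ (j0 + K * l + m * l + r)) x\<rfloor> = n - 1"
        unfolding eq using lo hi n by (simp add: floor_eq_iff)
      then show "\<lfloor>(Ut ^^ (j0 + K * l + m * l + r)) x\<rfloor> mod 2 = 1 - (\<lfloor>(U ^^ r) (real a)\<rfloor> mod 2)"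
        using n by simp presburger
    qed
    then show "\<exists>j::nat. \<forall>m::nat. \<forall>r<l.
            \<lfloor>(Ut ^^ (j + m * l + r)) x\<rfloor> mod 2 = 1 - (\<lfloor>(U ^^ r) (real a)\<rfloor> mod 2)" by blast
  }
qed

end
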